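(* For every $0<\alpha\le 1$ there exist $n$, $m$, a preference profile $\sigma$ on $n$ voters and $m$ alternatives, and two distributions $\mathcal{D}_1,\mathcal{D}_2$ both supported on $[0,1]$ such that no alternative $j\in A$ satisfies both $\mathbb{E}_{\mathcal{D}_1}[\mathrm{sw}(j,u)]\ge\alpha\max_{k\in A}\mathbb{E}_{\mathcal{D}_1}[\mathrm{sw}(k,u)]$ and $\mathbb{E}_{\mathcal{D}_2}[\mathrm{sw}(j,u)]\ge\alpha\max_{k\in A}\mathbb{E}_{\mathcal{D}_2}[\mathrm{sw}(k,u)]$.
   Context: There are $n$ voters and $m$ alternatives $A=\{1,\dots,m\}$. A preference profile $\sigma$ consists of a ranking of $A$ for each voter. Given a distribution $\mathcal{D}$ and profile $\sigma$, a random utility profile $u$ consistent with $\sigma$ is generated as follows: independently for each voter $i$, draw $m$ i.i.d. samples from $\mathcal{D}$ and assign them, from highest to lowest, to the alternatives in the order of voter $i$'s ranking. The social welfare of $j$ is $\mathrm{sw}(j,u)=\sum_i u_{ij}$; $\mathbb{E}_{\mathcal{D}}$ denotes expectation over $u$ generated with distribution $\mathcal{D}$. *)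

theory Defs
  imports "HOL-Probability.Probability"
begin

(* A preference profile sigma gives, for each voter i, the rank position
   sigma i j of alternative j (0 = most preferred); it must be a bijection
   {..<m} -> {..<m} for every voter. *)
definition is_profile :: "nat \<Rightarrow> nat \<Rightarrow> (nat \<Rightarrow> nat \<Rightarrow> nat) \<Rightarrow> bool" where
  "is_profile n m \<sigma> \<longleftrightarrow> (\<forall>i<n. bij_betw (\<sigma> i) {..<m} {..<m})"

definition unit_supported :: "real measure \<Rightarrow> bool" where
  "unit_supported D \<longleftrightarrow> prob_space D \<and> sets D = sets borel \<and> measure D {0..1} = 1"

definition desc_nth :: "(nat \<Rightarrow> real) \<Rightarrow> nat \<Rightarrow> nat \<Rightarrow> real" where
  "desc_nth x m k = rev (sort (map x [0..<m])) ! k"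

(* Samples: s i k is the k-th of the m i.i.d. draws of voter i.
   The utility of voter i for alternative j: the samples sorted from highest to
   lowest are assigned in the order of voter i's ranking. *)
definition utility :: "nat \<Rightarrow> (nat \<Rightarrow> nat \<Rightarrow> nat) \<Rightarrow> (nat \<Rightarrow> nat \<Rightarrow> real) \<Rightarrow> nat \<Rightarrow> nat \<Rightarrow> real" where
  "utility m \<sigma> s i j = desc_nth (s i) m (\<sigma> i j)"

definition sample_space :: "nat \<Rightarrow> nat \<Rightarrow> real measure \<Rightarrow> (nat \<Rightarrow> nat \<Rightarrow> real) measure" where
  "sample_space n m D = PiM {..<n} (\<lambda>_. PiM {..<m} (\<lambda>_. D))"

definition sw :: "nat \<Rightarrow> nat \<Rightarrow> (nat \<Rightarrow> nat \<Rightarrow> nat) \<Rightarrow> (nat \<Rightarrow> nat \<Rightarrow> real) \<Rightarrow> nat \<Rightarrow> real" where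
  "sw n m \<sigma> s j = (\<Sum>i<n. utility m \<sigma> s i j)"

definition expected_sw :: "nat \<Rightarrow> nat \<Rightarrow> (nat \<Rightarrow> nat \<Rightarrow> nat) \<Rightarrow> real measure \<Rightarrow> nat \<Rightarrow> real" where
  "expected_sw n m \<sigma> D j = (\<integral>s. sw n m \<sigma> s j \<partial>sample_space n m D)"

end

theory Submission
  imports Defs
begin

lemma count_sort_filter:
  "length (filter P (sort (map x [0..<m]))) = card {i. i < m \<and> P (x i)}"
proof -
  have "length (filter P (sort (map x [0..<m]))) = length (filter P (map x [0..<m]))"
    by (metis mset_filter mset_sort size_mset)
  also have "\<dots> = card {i. i < m \<and> P (map x [0..<m] ! i)}"
    by (simp add: length_filter_conv_card del: map_nth)
  also have "{i. i < m \<and> P (map x [0..<m] ! i)} = {i. i < m \<and> P (x i)}"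
    by auto
  finally show ?thesis .
qed

lemma desc_ge_iff:
  fixes x :: "nat \<Rightarrow> real"
  assumes "k < m"
  shows "(t \<le> desc_nth x m k) \<longleftrightarrow> k < card {i. i < m \<and> t \<le> x i}"
proof -
  define zs where "zs = sort (map x [0..<m])"
  have len: "length zs = m" by (simp add: zs_def)
  have sorted: "sorted zs" by (simp add: zs_def)
  define j where "j = m - 1 - k"
  have jm: "j < m" using assms by (simp add: j_def)
  have d: "desc_nth x m k = zs ! j"
    unfolding desc_nth_def zs_def[symmetric] j_def using assms len by (simp add: rev_nth)
  have c: "card {i. i < m \<and> t \<le> x i} = card {i. i < m \<and> t \<le> zs ! i}"
    using count_sort_filter[of "\<lambda>y. t \<le> y" x m] len
    by (simp add: zs_def length_filter_conv_card)
  show ?thesis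
  proof
    assume h: "t \<le> desc_nth x m k"
    have "{j..<m} \<subseteq> {i. i < m \<and> t \<le> zs ! i}"
    proof
      fix i assume "i \<in> {j..<m}"
      then have "zs ! j \<le> zs ! i" using sorted len by (auto intro: sorted_nth_mono)
      then show "i \<in> {i. i < m \<and> t \<le> zs ! i}" using h d \<open>i \<in> {j..<m}\<close> by auto
    qed
    then have "card {j..<m} \<le> card {i. i < m \<and> t \<le> zs ! i}" by (intro card_mono) auto
    then show "k < card {i. i < m \<and> t \<le> x i}" using c assms by (simp add: j_def)
  next
    assume h: "k < card {i. i < m \<and> t \<le> x i}"
    show "t \<le> desc_nth x m k"
    proof (rule ccontr)
      assume "\<not> t \<le> desc_nth x m k"
      then have lt: "zs ! j < t" using d by simp
      have "{i. i < m \<and> t \<le> zs ! i} \<subseteq> {Suc j..<m}"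
      proof
        fix i assume i: "i \<in> {i. i < m \<and> t \<le> zs ! i}"
        have "\<not> i \<le> j"
        proof
          assume "i \<le> j"
          then have "zs ! i \<le> zs ! j" using sorted len jm by (auto intro: sorted_nth_mono)
          then show False using i lt by auto
        qed
        then show "i \<in> {Suc j..<m}" using i by auto
      qed
      then have "card {i. i < m \<and> t \<le> zs ! i} \<le> card {Suc j..<m}" by (intro card_mono) auto
      then show False using c h assms by (simp add: j_def)
    qed
  qed
qed

definition Bern :: "real \<Rightarrow> real measure" where
  "Bern q = distr (measure_pmf (bernoulli_pmf q)) borel (\<lambda>b. if b then 1 else 0)"

lemma Bern_meas: "(\<lambda>b::bool. if b then 1 else (0::real)) \<in> measurable (measure_pmf (bernoulli_pmf q)) borel"
  by simp

lemma Bern_prob: "prob_space (Bern q)"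
  unfolding Bern_def by (intro prob_space.prob_space_distr) (auto simp: prob_space_measure_pmf)

lemma Bern_sets[simp]: "sets (Bern q) = sets borel"
  unfolding Bern_def by simp

lemma Bern_space[simp]: "space (Bern q) = UNIV"
  unfolding Bern_def by simp

lemma Bern_unit: "unit_supported (Bern q)"
proof -
  have e: "(\<lambda>b::bool. if b then 1 else (0::real)) -` {0..1} = UNIV" by auto
  have "measure (Bern q) {0..1} = measure (measure_pmf (bernoulli_pmf q)) UNIV"
    unfolding Bern_def by (subst measure_distr) (auto simp: e)
  then show ?thesis unfolding unit_supported_def using Bern_prob by simp
qed

lemma Bern_AE: "AE x in Bern q. x \<in> {0,1}"
  unfolding Bern_def by (subst AE_distr_iff) auto

lemma Bern_int:
  assumes "0 \<le> q" "q \<le> 1" "g \<in> borel_measurable borel"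
  shows "integral\<^sup>L (Bern q) g = g 1 * q + g 0 * (1 - q)"
  unfolding Bern_def using assms by (subst integral_distr) auto

abbreviation S :: "nat \<Rightarrow> real \<Rightarrow> (nat \<Rightarrow> real) measure" where
  "S m q \<equiv> PiM {..<m} (\<lambda>_. Bern q)"

lemma S_AE: "AE x in S m q. \<forall>i\<in>{..<m}. x i \<in> {0,1}"
proof (subst AE_ball_countable)
  show "countable {..<m}" by simp
  show "\<forall>i\<in>{..<m}. AE x in S m q. x i \<in> {0, 1}"
    by (intro ballI AE_PiM_component Bern_prob Bern_AE) auto
qed

lemma comp_meas: "i < m \<Longrightarrow> (\<lambda>x. x i) \<in> borel_measurable (S m q)"
proof -
  assume "i < m"
  then have "(\<lambda>x. x i) \<in> measurable (S m q) (Bern q)" by simp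
  then show ?thesis using measurable_cong_sets[OF refl Bern_sets, of "S m q" q] by simp
qed

lemma card_sum: "real (card {i. i < (m::nat) \<and> P i}) = (\<Sum>i<m. of_bool (P i))"
proof -
  have "(\<Sum>i<m. of_bool (P i) :: real) = of_nat (card ({..<m} \<inter> {i. P i}))"
    using sum_of_bool_eq[of "{..<m}" P, where ?'a=real] by simp
  moreover have "{i. i < m \<and> P i} = {..<m} \<inter> {i. P i}" by auto
  ultimately show ?thesis by simp
qed

lemma desc_meas:
  assumes "k < m"
  shows "(\<lambda>x. desc_nth x m k) \<in> borel_measurable (S m q)"
proof (subst borel_measurable_iff_ge, intro allI)
  fix t
  have g: "(\<lambda>v::real. of_bool (t \<le> v) :: real) \<in> borel_measurable borel" by measurable
  have h: "(\<lambda>x. \<Sum>i<m. of_bool (t \<le> x i) :: real) \<in> borel_measurable (S m q)"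
    by (intro borel_measurable_sum measurable_compose[OF comp_meas g]) simp
  have eqv: "(t \<le> desc_nth x m k) = (real k < (\<Sum>i<m. of_bool (t \<le> x i) :: real))" for x :: "nat \<Rightarrow> real"
  proof -
    have "(t \<le> desc_nth x m k) = (k < card {i. i < m \<and> t \<le> x i})" by (rule desc_ge_iff[OF assms])
    also have "\<dots> = (real k < real (card {i. i < m \<and> t \<le> x i}))" by (rule of_nat_less_iff[symmetric])
    also have "\<dots> = (real k < (\<Sum>i<m. of_bool (t \<le> x i) :: real))" by (simp only: card_sum)
    finally show ?thesis .
  qed
  have "{x \<in> space (S m q). t \<le> desc_nth x m k} =
        {x \<in> space (S m q). real k < (\<Sum>i<m. of_bool (t \<le> x i) :: real)}"
    by (simp only: eqv)
  also have "\<dots> \<in> sets (S m q)"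
    using h unfolding borel_measurable_iff_greater by blast
  finally show "{x \<in> space (S m q). t \<le> desc_nth x m k} \<in> sets (S m q)" .
qed

lemma desc_binary:
  fixes x :: "nat \<Rightarrow> real"
  assumes "\<forall>i\<in>{..<m}. x i \<in> {0,1}" "k < m"
  shows "desc_nth x m k = (if k < card {i. i < m \<and> x i = 1} then 1 else 0)"
proof -
  have len: "k < length (rev (sort (map x [0..<m])))" using assms(2) by simp
  have "desc_nth x m k \<in> set (rev (sort (map x [0..<m])))"
    unfolding desc_nth_def by (rule nth_mem[OF len])
  then have mem: "desc_nth x m k \<in> set (map x [0..<m])" by simp
  then have d01: "desc_nth x m k = 0 \<or> desc_nth x m k = 1" using assms(1) by auto
  have seq: "{i. i < m \<and> 1 \<le> x i} = {i. i < m \<and> x i = 1}" using assms(1) by force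
  have ge: "(1 \<le> desc_nth x m k) = (k < card {i. i < m \<and> x i = 1})"
    using desc_ge_iff[OF assms(2), of 1 x] unfolding seq .
  show ?thesis
  proof (cases "k < card {i. i < m \<and> x i = 1}")
    case True
    then have "1 \<le> desc_nth x m k" using ge by simp
    then have "desc_nth x m k = 1" using d01 by auto
    then show ?thesis using True by simp
  next
    case False
    then have "\<not> 1 \<le> desc_nth x m k" using ge by simp
    then have "desc_nth x m k = 0" using d01 by auto
    then show ?thesis using False by simp
  qed
qed

definition w :: "real \<Rightarrow> real \<Rightarrow> real" where "w c v = (if v = 1 then c else 1)"

lemma w_meas[measurable]: "w c \<in> borel_measurable borel"
  unfolding w_def by measurable

lemma prod_w:
  fixes x :: "nat \<Rightarrow> real"
  assumes "\<forall>i\<in>{..<m}. x i \<in> {0,1}"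
  shows "(\<Prod>i<m. w c (x i)) = c ^ card {i. i < m \<and> x i = 1}"
proof -
  have "(\<Prod>i<m. w c (x i)) = (\<Prod>i\<in>{..<m} \<inter> {i. x i = 1}. c) * (\<Prod>i\<in>{..<m} \<inter> - {i. x i = 1}. 1)"
    unfolding w_def using prod.If_cases[OF finite_lessThan, of "\<lambda>i. x i = 1" "\<lambda>_. c" "\<lambda>_. 1"] by simp
  moreover have "{..<m} \<inter> {i. x i = 1} = {i. i < m \<and> x i = 1}" by auto
  ultimately show ?thesis by simp
qed

lemma moment:
  assumes "0 \<le> q" "q \<le> 1"
  shows "(\<integral>x. (\<Prod>i<m. w c (x i)) \<partial>S m q) = (q * c + (1 - q)) ^ m"
proof -
  interpret product_sigma_finite "\<lambda>_::nat. Bern q"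
    unfolding product_sigma_finite_def
    using Bern_prob prob_space_imp_sigma_finite by blast
  interpret P: prob_space "Bern q" by (rule Bern_prob)
  have int: "integrable (Bern q) (w c)"
    by (rule P.integrable_const_bound[where B="\<bar>c\<bar> + 1"])
       (auto simp: w_def measurable_cong_sets[OF Bern_sets refl])
  have "(\<integral>x. (\<Prod>i<m. w c (x i)) \<partial>S m q) = (\<Prod>i<m. integral\<^sup>L (Bern q) (w c))"
    by (rule product_integral_prod) (auto intro: int)
  also have "\<dots> = (q * c + (1 - q)) ^ m"
    using assms by (simp add: Bern_int w_def mult.commute)
  finally show ?thesis .
qed

definition e :: "nat \<Rightarrow> real \<Rightarrow> nat \<Rightarrow> real" where
  "e m q k = (\<integral>x. desc_nth x m k \<partial>S m q)"

lemma S_prob: "prob_space (S m q)"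
  by (intro prob_space_PiM Bern_prob)

lemma desc_int:
  assumes "k < m"
  shows "integrable (S m q) (\<lambda>x. desc_nth x m k)"
proof -
  interpret P: prob_space "S m q" by (rule S_prob)
  show ?thesis
  proof (rule P.integrable_const_bound[where B=1])
    show "AE x in S m q. norm (desc_nth x m k) \<le> 1"
      by (rule eventually_mono[OF S_AE]) (simp add: desc_binary[OF _ assms])
    show "(\<lambda>x. desc_nth x m k) \<in> borel_measurable (S m q)" by (rule desc_meas[OF assms])
  qed
qed

lemma prod_int:
  "integrable (S m q) (\<lambda>x. \<Prod>i<m. w c (x i))"
proof -
  interpret product_sigma_finite "\<lambda>_::nat. Bern q"
    unfolding product_sigma_finite_def
    using Bern_prob prob_space_imp_sigma_finite by blast
  interpret P: prob_space "Bern q" by (rule Bern_prob)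
  have int: "integrable (Bern q) (w c)"
    by (rule P.integrable_const_bound[where B="\<bar>c\<bar> + 1"])
       (auto simp: w_def measurable_cong_sets[OF Bern_sets refl])
  show ?thesis by (rule product_integrable_prod) (simp, rule int)
qed

lemma pt_upper:
  fixes x :: "nat \<Rightarrow> real"
  assumes elim: "\<forall>i\<in>{..<m}. x i \<in> {0,1}" and "1 \<le> c" "k < m"
  shows "desc_nth x m k \<le> (\<Prod>i<m. w c (x i)) / c ^ (k + 1)"
proof -
  obtain N where N_def: "N = card {i. i < m \<and> x i = 1}" by simp
  have pc: "0 < c ^ (k+1)" using assms by simp
  have d: "desc_nth x m k = (if k < N then 1 else 0)"
    unfolding N_def by (rule desc_binary[OF elim assms(3)])
  have p: "(\<Prod>i<m. w c (x i)) = c ^ N"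
    unfolding N_def by (rule prod_w[OF elim])
  have nn: "0 \<le> c ^ N / c ^ (k + 1)" using assms by simp
  show ?thesis
  proof (cases "k < N")
    case True
    then have "c ^ (k+1) \<le> c ^ N" using assms by (intro power_increasing) auto
    then have "1 \<le> c ^ N / c ^ (k + 1)" using pc by (simp add: le_divide_eq)
    then show ?thesis unfolding d p using True by simp
  next
    case False
    then show ?thesis unfolding d p using nn by simp
  qed
qed

lemma pt_lower:
  fixes x :: "nat \<Rightarrow> real"
  assumes elim: "\<forall>i\<in>{..<m}. x i \<in> {0,1}" and "1 \<le> c" "k < m"
  shows "1 - c ^ k * (\<Prod>i<m. w (1/c) (x i)) \<le> desc_nth x m k"
proof -
  obtain N where N_def: "N = card {i. i < m \<and> x i = 1}" by simp
  have d: "desc_nth x m k = (if k < N then 1 else 0)"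
    unfolding N_def by (rule desc_binary[OF elim assms(3)])
  have p: "(\<Prod>i<m. w (1/c) (x i)) = (1/c) ^ N"
    unfolding N_def by (rule prod_w[OF elim])
  have nn: "0 \<le> c ^ k * (1/c) ^ N" using assms by simp
  show ?thesis
  proof (cases "k < N")
    case True
    then show ?thesis unfolding d p using nn by simp
  next
    case False
    then have "c ^ N \<le> c ^ k" using assms by (intro power_increasing) auto
    moreover have "c ^ k * (1 / c) ^ N = c ^ k / c ^ N" by (simp add: power_one_over)
    moreover have "0 < c ^ N" using assms by simp
    ultimately have "1 \<le> c ^ k * (1 / c) ^ N" by (simp add: le_divide_eq)
    then show ?thesis unfolding d p using False by simp
  qed
qed

lemma e_upper:
  assumes "0 \<le> q" "q \<le> 1" "1 \<le> c" "k < m"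
  shows "e m q k \<le> (q * c + (1 - q)) ^ m / c ^ (k + 1)"
proof -
  have "e m q k \<le> (\<integral>x. (\<Prod>i<m. w c (x i)) / c ^ (k + 1) \<partial>S m q)"
    unfolding e_def
  proof (rule integral_mono_AE)
    show "integrable (S m q) (\<lambda>x. desc_nth x m k)" by (rule desc_int[OF assms(4)])
    show "integrable (S m q) (\<lambda>x. (\<Prod>i<m. w c (x i)) / c ^ (k + 1))"
      using prod_int by (rule integrable_divide_zero)
    show "AE x in S m q. desc_nth x m k \<le> (\<Prod>i<m. w c (x i)) / c ^ (k + 1)"
      using assms by (intro eventually_mono[OF S_AE] pt_upper) auto
  qed
  also have "\<dots> = (q * c + (1 - q)) ^ m / c ^ (k + 1)"
    by (simp only: integral_divide_zero moment[OF assms(1,2)])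
  finally show ?thesis .
qed

lemma e_lower:
  assumes "0 \<le> q" "q \<le> 1" "1 \<le> c" "k < m"
  shows "1 - c ^ k * (q * (1 / c) + (1 - q)) ^ m \<le> e m q k"
proof -
  interpret P: prob_space "S m q" by (rule S_prob)
  have "(\<integral>x. 1 - c ^ k * (\<Prod>i<m. w (1/c) (x i)) \<partial>S m q) \<le> e m q k"
    unfolding e_def
  proof (rule integral_mono_AE)
    show "integrable (S m q) (\<lambda>x. desc_nth x m k)" by (rule desc_int[OF assms(4)])
    show "integrable (S m q) (\<lambda>x. 1 - c ^ k * (\<Prod>i<m. w (1/c) (x i)))"
      using prod_int[where c="1/c" and m=m and q=q] by (intro Bochner_Integration.integrable_diff integrable_const integrable_mult_right) (simp_all add: S_prob prob_space.finite_measure)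
    show "AE x in S m q. 1 - c ^ k * (\<Prod>i<m. w (1/c) (x i)) \<le> desc_nth x m k"
      using assms by (intro eventually_mono[OF S_AE] pt_lower) auto
  qed
  moreover have "(\<integral>x. 1 - c ^ k * (\<Prod>i<m. w (1/c) (x i)) \<partial>S m q) =
      1 - c ^ k * (q * (1 / c) + (1 - q)) ^ m"
  proof -
    define F where "F = (\<lambda>x. \<Prod>i<m. w (1/c) (x i))"
    have iF: "integrable (S m q) F" unfolding F_def by (rule prod_int)
    have mF: "integral\<^sup>L (S m q) F = (q * (1 / c) + (1 - q)) ^ m"
      unfolding F_def by (rule moment[OF assms(1,2)])
    have "(\<integral>x. 1 - c ^ k * F x \<partial>S m q) = (\<integral>x. 1 \<partial>S m q) - (\<integral>x. c ^ k * F x \<partial>S m q)"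
      by (rule Bochner_Integration.integral_diff) (auto intro: iF)
    also have "\<dots> = 1 - c ^ k * integral\<^sup>L (S m q) F"
      by (simp add: P.prob_space)
    also have "\<dots> = 1 - c ^ k * (q * (1 / c) + (1 - q)) ^ m" using mF by simp
    finally show ?thesis unfolding F_def .
  qed
  ultimately show ?thesis by linarith
qed

lemma e_nonneg:
  assumes "k < m"
  shows "0 \<le> e m q k"
  unfolding e_def
proof (rule integral_nonneg_AE)
  show "AE x in S m q. 0 \<le> desc_nth x m k"
    by (rule eventually_mono[OF S_AE]) (simp add: desc_binary[OF _ assms])
qed

lemma exp_sw:
  assumes "\<forall>i<n. \<sigma> i j < m"
  shows "expected_sw n m \<sigma> (Bern q) j = (\<Sum>i<n. e m q (\<sigma> i j))"
proof -
  let ?M = "PiM {..<n} (\<lambda>_. S m q)"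
  have comp: "\<And>i. i < n \<Longrightarrow> distr ?M (S m q) (\<lambda>s. s i) = S m q"
    by (rule distr_PiM_component) (auto intro: S_prob)
  have meas: "\<And>i. i < n \<Longrightarrow> (\<lambda>s. s i) \<in> measurable ?M (S m q)" by simp
  have int: "integrable ?M (\<lambda>s. desc_nth (s i) m (\<sigma> i j))" if "i < n" for i
  proof -
    have "integrable (distr ?M (S m q) (\<lambda>s. s i)) (\<lambda>x. desc_nth x m (\<sigma> i j))"
      using comp[OF that] desc_int assms that by simp
    then show ?thesis
      using integrable_distr_eq[OF meas[OF that] desc_meas] assms that by simp
  qed
  have eq: "(\<integral>s. desc_nth (s i) m (\<sigma> i j) \<partial>?M) = e m q (\<sigma> i j)" if "i < n" for i
  proof -
    have "(\<integral>s. desc_nth (s i) m (\<sigma> i j) \<partial>?M) =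
          (\<integral>x. desc_nth x m (\<sigma> i j) \<partial>distr ?M (S m q) (\<lambda>s. s i))"
      using integral_distr[OF meas[OF that] desc_meas] assms that by simp
    then show ?thesis using comp[OF that] by (simp add: e_def)
  qed
  have "expected_sw n m \<sigma> (Bern q) j = (\<integral>s. (\<Sum>i<n. desc_nth (s i) m (\<sigma> i j)) \<partial>?M)"
    unfolding expected_sw_def sw_def utility_def sample_space_def by simp
  also have "\<dots> = (\<Sum>i<n. \<integral>s. desc_nth (s i) m (\<sigma> i j) \<partial>?M)"
    by (rule Bochner_Integration.integral_sum) (use int in auto)
  also have "\<dots> = (\<Sum>i<n. e m q (\<sigma> i j))"
    by (rule sum.cong) (auto simp: eq)
  finally show ?thesis .
qed

definition prof :: "nat \<Rightarrow> nat \<Rightarrow> nat \<Rightarrow> nat \<Rightarrow> nat" where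
  "prof r L i j = (if j < r then (if j = i then 0 else if j < i then L + 1 + j else L + j) else j - r + 1)"

lemma prof_range: "i < r \<Longrightarrow> j < r + L \<Longrightarrow> prof r L i j < r + L"
  unfolding prof_def by auto

lemma prof_profile: "is_profile r (r + L) (prof r L)"
  unfolding is_profile_def
proof (intro allI impI)
  fix i assume i: "i < r"
  have sub: "prof r L i ` {..<r + L} \<subseteq> {..<r + L}" using prof_range[OF i] by auto
  have inj: "inj_on (prof r L i) {..<r + L}"
    unfolding inj_on_def prof_def by (auto split: if_splits)
  show "bij_betw (prof r L i) {..<r + L} {..<r + L}"
    unfolding bij_betw_def using endo_inj_surj[OF _ sub inj] inj by simp
qed

lemma prof_diag: "j < r \<Longrightarrow> prof r L j j = 0" unfolding prof_def by simp

lemma prof_off: "i \<noteq> j \<Longrightarrow> i < r \<Longrightarrow> j < r \<Longrightarrow> L + 1 \<le> prof r L i j"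
  unfolding prof_def by auto

lemma prof_dummy: "r \<le> j \<Longrightarrow> prof r L i j = j - r + 1"
  unfolding prof_def by auto

theorem theorem4:
  fixes \<alpha> :: real
  assumes "0 < \<alpha>" and "\<alpha> \<le> 1"
  shows "\<exists>n m \<sigma> D1 D2. n \<ge> 1 \<and> m \<ge> 1 \<and> is_profile n m \<sigma> \<and>
           unit_supported D1 \<and> unit_supported D2 \<and>
           \<not> (\<exists>j<m. expected_sw n m \<sigma> D1 j \<ge> \<alpha> * Max ((\<lambda>k. expected_sw n m \<sigma> D1 k) ` {..<m})
                  \<and> expected_sw n m \<sigma> D2 j \<ge> \<alpha> * Max ((\<lambda>k. expected_sw n m \<sigma> D2 k) ` {..<m}))"
proof -
  define r where "r = nat \<lceil>4 / \<alpha>\<rceil> + 5"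
  have r5: "5 \<le> r" unfolding r_def by simp
  have "4 / \<alpha> \<le> real (nat \<lceil>4 / \<alpha>\<rceil>)" by linarith
  then have "4 / \<alpha> < real r" unfolding r_def by simp
  then have ar: "4 < \<alpha> * real r" using assms(1) by (simp add: divide_less_eq mult.commute)
  have rpos: "0 < real r" using r5 by simp
  obtain L0 where L0: "(2/3::real) ^ L0 < 1 / (real r * 2 ^ r)"
    using real_arch_pow_inv[of "1 / (real r * 2 ^ r)" "2/3"] rpos by auto
  define L where "L = L0 + 1"
  have "(2/3::real) ^ L \<le> (2/3) ^ L0" unfolding L_def by (intro power_decreasing) auto
  with L0 have L: "(2/3::real) ^ L < 1 / (real r * 2 ^ r)" by linarith
  define m where "m = r + L"
  have m5: "5 \<le> m" "r < m" unfolding m_def L_def using r5 by auto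
  define p where "p = \<alpha> / (real r * 2 ^ (m + 2))"
  have p0: "0 < p" unfolding p_def using assms rpos by simp
  have rp: "real r * 2 ^ m * p = \<alpha> / 4" unfolding p_def using rpos by (simp add: field_simps)
  have h2: "(1::real) \<le> 2 ^ (m + 2)" by (rule one_le_power) simp
  have "(1::real) * 1 \<le> real r * 2 ^ (m + 2)" using r5 h2 by (intro mult_mono) auto
  then have p1: "p \<le> 1" unfolding p_def using assms by (simp add: divide_le_eq)
  define \<sigma> where "\<sigma> = prof r L"
  let ?E1 = "\<lambda>k. expected_sw r m \<sigma> (Bern p) k"
  let ?E2 = "\<lambda>k. expected_sw r m \<sigma> (Bern (1/2)) k"
  have rng: "\<forall>i<r. \<sigma> i j < m" if "j < m" for j
    using prof_range that unfolding \<sigma>_def m_def by auto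
  have E1: "?E1 j = (\<Sum>i<r. e m p (\<sigma> i j))" if "j < m" for j
    by (rule exp_sw[where \<sigma>=\<sigma> and n=r and m=m and j=j, OF rng[OF that]])
  have E2: "?E2 j = (\<Sum>i<r. e m (1/2) (\<sigma> i j))" if "j < m" for j
    by (rule exp_sw[where \<sigma>=\<sigma> and n=r and m=m and j=j, OF rng[OF that]])
  have M1: "?E1 k \<le> Max (?E1 ` {..<m})" if "k < m" for k
    using that by (intro Max_ge) auto
  have M2: "?E2 k \<le> Max (?E2 ` {..<m})" if "k < m" for k
    using that by (intro Max_ge) auto
  have e10: "p / 2 \<le> e m p 0"
  proof -
    have "1 - 2 ^ 0 * (p * (1 / 2) + (1 - p)) ^ m \<le> e m p 0"
      by (rule e_lower) (use p0 p1 m5 in auto)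
    moreover have "p * (1 / 2) + (1 - p) = 1 - p / 2" by simp
    moreover have "(1 - p / 2) ^ m \<le> (1 - p / 2) ^ 1"
      by (rule power_decreasing) (use p0 p1 m5 in auto)
    ultimately show ?thesis by simp
  qed
  have E10: "e m p 0 \<le> ?E1 0"
  proof -
    have "e m p (\<sigma> 0 0) \<le> (\<Sum>i<r. e m p (\<sigma> i 0))"
      by (rule member_le_sum) (use r5 m5 rng[of 0] e_nonneg in auto)
    then show ?thesis using E1[of 0] m5 r5 prof_diag[of 0 r L] unfolding \<sigma>_def by simp
  qed
  have max1: "p / 2 \<le> Max (?E1 ` {..<m})" using e10 E10 M1[of 0] m5 by linarith
  have dummy: "?E1 j < \<alpha> * Max (?E1 ` {..<m})" if "r \<le> j" "j < m" for j
  proof -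
    define k where "k = j - r + 1"
    have k: "1 \<le> k" "k < m" unfolding k_def using that r5 by auto
    have "?E1 j = (\<Sum>i<r. e m p k)"
      using E1[OF that(2)] prof_dummy[OF that(1)] unfolding \<sigma>_def k_def by simp
    also have "\<dots> = real r * e m p k" by simp
    also have "\<dots> \<le> real r * (2 ^ m * p ^ 2)"
    proof -
      have "e m p k \<le> (p * (1/p) + (1 - p)) ^ m / (1/p) ^ (k + 1)"
        by (rule e_upper) (use p0 p1 k in auto)
      also have "\<dots> = (2 - p) ^ m * p ^ (k + 1)"
        using p0 by (simp add: power_one_over)
      also have "\<dots> \<le> 2 ^ m * p ^ 2"
      proof (rule mult_mono)
        show "(2 - p) ^ m \<le> 2 ^ m" using p0 p1 by (intro power_mono) auto
        show "p ^ (k + 1) \<le> p ^ 2" using p0 p1 k by (intro power_decreasing) auto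
      qed (use p0 in auto)
      finally show ?thesis using rpos by simp
    qed
    also have "\<dots> = \<alpha> * p / 4" using rp by (simp add: power2_eq_square algebra_simps)
    also have "\<dots> < \<alpha> * (p / 2)" using assms p0 by simp
    also have "\<dots> \<le> \<alpha> * Max (?E1 ` {..<m})" using max1 assms by simp
    finally show ?thesis .
  qed
  define B where "B = (2::real) ^ m / 3 ^ (L + 2)"
  have B0: "0 \<le> B" unfolding B_def by simp
  have rB: "real r * B < 1"
  proof -
    have "B = 2 ^ r * (2/3) ^ L / 9"
      unfolding B_def m_def by (simp add: power_add power_divide field_simps)
    also have "\<dots> < 2 ^ r * (1 / (real r * 2 ^ r)) / 9"
      using L by (intro divide_strict_right_mono mult_strict_left_mono) auto
    finally have "B < 1 / (9 * real r)" using rpos by (simp add: field_simps)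
    then show ?thesis using rpos by (simp add: field_simps)
  qed
  have e2up: "e m (1/2) k \<le> 1" if "k < m" for k
    using e_upper[of "1/2" 1 k m] that by simp
  have e2off: "e m (1/2) k \<le> B" if "L + 1 \<le> k" "k < m" for k
  proof -
    have "e m (1/2) k \<le> ((1/2) * 3 + (1 - 1/2)) ^ m / 3 ^ (k + 1)"
      by (rule e_upper) (use that in auto)
    also have "\<dots> = 2 ^ m / 3 ^ (k + 1)" by simp
    also have "\<dots> \<le> 2 ^ m / 3 ^ (L + 2)"
      by (intro divide_left_mono power_increasing) (use that in auto)
    finally show ?thesis unfolding B_def .
  qed
  have max2: "real r / 2 \<le> Max (?E2 ` {..<m})"
  proof -
    have "1 - 2 ^ 1 * ((1/2) * (1 / 2) + (1 - 1/2)) ^ m \<le> e m (1/2) 1"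
      by (rule e_lower) (use m5 in auto)
    moreover have "((3::real) / 4) ^ m \<le> (3 / 4) ^ 5"
      by (rule power_decreasing) (use m5 in auto)
    moreover have "((3::real) / 4) ^ 5 = 243 / 1024" by (simp add: power_divide)
    moreover have "((1::real)/2) * (1 / 2) + (1 - 1/2) = 3 / 4" by simp
    ultimately have e21: "1 / 2 \<le> e m (1/2) 1" by (simp only: power_one_right)
    have "?E2 r = (\<Sum>i<r. e m (1/2) 1)"
      using E2[of r] m5 prof_dummy[of r r L] unfolding \<sigma>_def by simp
    then have "?E2 r = real r * e m (1/2) 1" by simp
    then have "real r / 2 \<le> ?E2 r" using e21 rpos by simp
    then show ?thesis using M2[of r] m5 by linarith
  qed
  have alt: "?E2 j < \<alpha> * Max (?E2 ` {..<m})" if "j < r" for j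
  proof -
    have jm: "j < m" using that m5 by simp
    have "?E2 j = (\<Sum>i<r. e m (1/2) (\<sigma> i j))" by (rule E2[OF jm])
    also have "\<dots> \<le> (\<Sum>i<r. (if i = j then 1 else 0) + B)"
    proof (rule sum_mono)
      fix i assume i: "i \<in> {..<r}"
      show "e m (1/2) (\<sigma> i j) \<le> (if i = j then 1 else 0) + B"
      proof (cases "i = j")
        case True
        then show ?thesis using e2up[of "\<sigma> i j"] rng[OF jm] i B0 by auto
      next
        case False
        then have "L + 1 \<le> \<sigma> i j" using prof_off[of i j r L] i that unfolding \<sigma>_def by auto
        then show ?thesis using e2off[of "\<sigma> i j"] rng[OF jm] i False by auto
      qed
    qed
    also have "\<dots> = 1 + real r * B" using that by (simp add: sum.distrib)
    also have "\<dots> < 2" using rB by simp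
    also have "\<dots> < \<alpha> * (real r / 2)" using ar by simp
    also have "\<dots> \<le> \<alpha> * Max (?E2 ` {..<m})" using max2 assms by simp
    finally show ?thesis .
  qed
  show ?thesis
  proof (intro exI conjI)
    show "1 \<le> r" using r5 by simp
    show "1 \<le> m" using m5 by simp
    show "is_profile r m \<sigma>" unfolding \<sigma>_def m_def by (rule prof_profile)
    show "unit_supported (Bern p)" by (rule Bern_unit)
    show "unit_supported (Bern (1/2))" by (rule Bern_unit)
    show "\<not> (\<exists>j<m. \<alpha> * Max (?E1 ` {..<m}) \<le> ?E1 j \<and> \<alpha> * Max (?E2 ` {..<m}) \<le> ?E2 j)"
    proof
      assume "\<exists>j<m. \<alpha> * Max (?E1 ` {..<m}) \<le> ?E1 j \<and> \<alpha> * Max (?E2 ` {..<m}) \<le> ?E2 j"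
      then obtain j where j: "j < m" "\<alpha> * Max (?E1 ` {..<m}) \<le> ?E1 j" "\<alpha> * Max (?E2 ` {..<m}) \<le> ?E2 j"
        by blast
      show False
      proof (cases "j < r")
        case True
        then show False using alt[OF True] j by linarith
      next
        case False
        then show False using dummy[of j] j by linarith
      qed
    qed
  qed
qed

end
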